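(* Let $n\ge 2$ and $q\ge 2$ be integers, $E_q=\{0,1,\dots,q-1\}$, and let $A\subseteq E_q^n$ be a subset such that $q$ divides $|A|$ and $A$ has uniform column distribution, i.e. for every coordinate $i$ at which the elements of $A$ do not all agree, each value $b\in E_q$ occurs as the $i$-th coordinate of exactly $|A|/q$ elements of $A$. Then $A$ is metrically dense: $R(A)\le R(B)$ for every subset $B\subseteq E_q^n$ that is isometric to $A$.
   Context: $E_q^n$ is the set of all $n$-tuples over $E_q$ with Hamming distance $d_H(x,y)=|\{i: x_i\neq y_i\}|$. For $A\subseteq E_q^n$, $R(A)$ is the number of coordinates $i$ such that the $i$-th coordinates of the elements of $A$ are not all equal (the number of non-constant columns of the matrix whose rows are the elements of $A$). Two subsets $A,B\subseteq E_q^n$ are isometric if there is a bijection $\phi:A\to B$ with $d_H(\phi(x),\phi(y))=d_H(x,y)$ for all $x,y\in A$. *)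

theory Defs
  imports Main
begin

definition Eqn :: "nat \<Rightarrow> nat \<Rightarrow> nat list set" where
  "Eqn q n = {x. length x = n \<and> set x \<subseteq> {0..<q}}"

definition hamming :: "nat list \<Rightarrow> nat list \<Rightarrow> nat" where
  "hamming x y = card {i. i < length x \<and> x ! i \<noteq> y ! i}"

definition R :: "nat \<Rightarrow> nat list set \<Rightarrow> nat" where
  "R n A = card {i. i < n \<and> (\<exists>x\<in>A. \<exists>y\<in>A. x ! i \<noteq> y ! i)}"

definition isometric :: "nat list set \<Rightarrow> nat list set \<Rightarrow> bool" where
  "isometric A B \<longleftrightarrow> (\<exists>\<phi>. bij_betw \<phi> A B \<and>
      (\<forall>x\<in>A. \<forall>y\<in>A. hamming (\<phi> x) (\<phi> y) = hamming x y))"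

definition metrically_dense :: "nat \<Rightarrow> nat \<Rightarrow> nat list set \<Rightarrow> bool" where
  "metrically_dense q n A \<longleftrightarrow>
     (\<forall>B. B \<subseteq> Eqn q n \<and> isometric A B \<longrightarrow> R n A \<le> R n B)"

end

theory Submission
  imports Defs Complex_Main
begin

definition ncols :: "nat \<Rightarrow> nat list set \<Rightarrow> nat set" where
  "ncols n A = {i. i < n \<and> (\<exists>x\<in>A. \<exists>y\<in>A. x ! i \<noteq> y ! i)}"

definition Dp :: "nat list set \<Rightarrow> nat \<Rightarrow> nat" where
  "Dp A i = card {p \<in> A \<times> A. fst p ! i \<noteq> snd p ! i}"

definition cnt :: "nat list set \<Rightarrow> nat \<Rightarrow> nat \<Rightarrow> nat" where
  "cnt A i b = card {x\<in>A. x ! i = b}"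

lemma finite_Eqn: "finite (Eqn q n)"
proof -
  have "Eqn q n = {xs. set xs \<subseteq> {0..<q} \<and> length xs = n}" unfolding Eqn_def by auto
  thus ?thesis using finite_lists_length_eq[of "{0..<q}" n] by simp
qed

lemma cs_real:
  fixes c :: "nat \<Rightarrow> real"
  assumes "finite I"
  shows "(\<Sum>i\<in>I. c i)^2 \<le> real (card I) * (\<Sum>i\<in>I. (c i)^2)"
proof -
  have "0 \<le> (\<Sum>i\<in>I. \<Sum>j\<in>I. (c i - c j)^2)" by (intro sum_nonneg) auto
  also have "\<dots> = (\<Sum>i\<in>I. \<Sum>j\<in>I. (c i)^2 + (c j)^2 - 2 * c i * c j)"
    by (simp add: power2_diff)
  also have "\<dots> = (\<Sum>i\<in>I. \<Sum>j\<in>I. (c i)^2) + (\<Sum>i\<in>I. \<Sum>j\<in>I. (c j)^2)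
      - 2 * (\<Sum>i\<in>I. \<Sum>j\<in>I. c i * c j)"
    by (simp add: sum_subtractf sum.distrib sum_distrib_left mult.assoc)
  also have "(\<Sum>i\<in>I. \<Sum>j\<in>I. c i * c j) = (\<Sum>i\<in>I. c i)^2"
    by (simp add: power2_eq_square sum_product)
  also have "(\<Sum>i\<in>I. \<Sum>j\<in>I. (c j)^2) = real (card I) * (\<Sum>i\<in>I. (c i)^2)" by simp
  also have "(\<Sum>i\<in>I. \<Sum>j\<in>I. (c i)^2) = real (card I) * (\<Sum>i\<in>I. (c i)^2)"
    by (simp add: sum_distrib_left mult.commute)
  finally show ?thesis by simp
qed

lemma cs_nat:
  fixes c :: "nat \<Rightarrow> nat"
  assumes "finite I"
  shows "(\<Sum>i\<in>I. c i)^2 \<le> card I * (\<Sum>i\<in>I. (c i)^2)"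
proof -
  have "real ((\<Sum>i\<in>I. c i)^2) \<le> real (card I * (\<Sum>i\<in>I. (c i)^2))"
    using cs_real[OF assms, of "\<lambda>i. real (c i)"] by simp
  thus ?thesis by linarith
qed

lemma pair_sum:
  assumes "finite A" "\<forall>x\<in>A. length x = n"
  shows "(\<Sum>p\<in>A \<times> A. hamming (fst p) (snd p)) = (\<Sum>i<n. Dp A i)"
proof -
  have h: "hamming (fst p) (snd p) = (\<Sum>i<n. if fst p ! i \<noteq> snd p ! i then 1 else 0)"
    if "p \<in> A \<times> A" for p
  proof -
    have "length (fst p) = n" using that assms by auto
    hence "{i. i < length (fst p) \<and> fst p ! i \<noteq> snd p ! i} = {i\<in>{..<n}. fst p ! i \<noteq> snd p ! i}"
      by auto
    moreover have "{..<n} \<inter> {i. fst p ! i \<noteq> snd p ! i} = {i\<in>{..<n}. fst p ! i \<noteq> snd p ! i}"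
      by auto
    ultimately show ?thesis unfolding hamming_def by (simp add: sum.If_cases)
  qed
  have "(\<Sum>p\<in>A \<times> A. hamming (fst p) (snd p))
      = (\<Sum>p\<in>A \<times> A. \<Sum>i<n. if fst p ! i \<noteq> snd p ! i then 1 else 0)"
    using h by (rule sum.cong[OF refl])
  also have "\<dots> = (\<Sum>i<n. \<Sum>p\<in>A \<times> A. if fst p ! i \<noteq> snd p ! i then 1 else 0)"
    by (rule sum.swap)
  also have "\<dots> = (\<Sum>i<n. Dp A i)"
    unfolding Dp_def using assms(1) by (simp add: sum.If_cases Int_def)
  finally show ?thesis .
qed

lemma Dp_zero: assumes "i \<notin> ncols n A" "i < n" shows "Dp A i = 0"
proof -
  have "{p \<in> A \<times> A. fst p ! i \<noteq> snd p ! i} = {}" using assms unfolding ncols_def by auto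
  thus ?thesis unfolding Dp_def by (metis card.empty)
qed

lemma split_sq:
  assumes "finite A" "\<forall>x\<in>A. x ! i < q"
  shows "card A ^ 2 = Dp A i + (\<Sum>b<q. (cnt A i b)^2)"
    and "card A = (\<Sum>b<q. cnt A i b)"
proof -
  let ?S = "\<lambda>b. {x\<in>A. x ! i = b}"
  have eq: "{p \<in> A \<times> A. \<not> (fst p ! i \<noteq> snd p ! i)} = (\<Union>b<q. ?S b \<times> ?S b)"
    using assms(2) by fastforce
  have "card (\<Union>b<q. ?S b \<times> ?S b) = (\<Sum>b<q. card (?S b \<times> ?S b))"
    by (rule card_UN_disjoint) (use assms(1) in auto)
  hence ce: "card {p \<in> A \<times> A. \<not> (fst p ! i \<noteq> snd p ! i)} = (\<Sum>b<q. (cnt A i b)^2)"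
    unfolding eq cnt_def by (simp add: card_cartesian_product power2_eq_square)
  have "card (A \<times> A) = Dp A i + card {p \<in> A \<times> A. \<not> (fst p ! i \<noteq> snd p ! i)}"
  proof -
    have "A \<times> A = {p \<in> A \<times> A. fst p ! i \<noteq> snd p ! i} \<union> {p \<in> A \<times> A. \<not> (fst p ! i \<noteq> snd p ! i)}"
      by blast
    hence "card (A \<times> A) = card {p \<in> A \<times> A. fst p ! i \<noteq> snd p ! i} + card {p \<in> A \<times> A. \<not> (fst p ! i \<noteq> snd p ! i)}"
      using assms(1) by (metis (no_types, lifting) card_Un_disjoint disjoint_iff finite_SigmaI finite_subset mem_Collect_eq subsetI)
    thus ?thesis unfolding Dp_def .
  qed
  thus "card A ^ 2 = Dp A i + (\<Sum>b<q. (cnt A i b)^2)"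
    using ce by (simp add: card_cartesian_product power2_eq_square)
  have eq2: "A = (\<Union>b<q. ?S b)" using assms(2) by auto
  have "card (\<Union>b<q. ?S b) = (\<Sum>b<q. card (?S b))"
    by (rule card_UN_disjoint) (use assms(1) in auto)
  thus "card A = (\<Sum>b<q. cnt A i b)" using eq2 unfolding cnt_def by simp
qed

lemma col_bound:
  assumes "finite A" "\<forall>x\<in>A. x ! i < q"
  shows "q * Dp A i \<le> (q - 1) * card A ^ 2"
proof -
  note sp = split_sq[OF assms]
  have "card A ^ 2 \<le> q * (\<Sum>b<q. (cnt A i b)^2)"
    using cs_nat[of "{..<q}" "cnt A i"] sp(2) by simp
  moreover have "q * card A ^ 2 = q * Dp A i + q * (\<Sum>b<q. (cnt A i b)^2)"
    using sp(1) by (metis add_mult_distrib2)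
  moreover have "(q - 1) * card A ^ 2 = q * card A ^ 2 - card A ^ 2"
    by (simp add: diff_mult_distrib)
  ultimately show ?thesis by linarith
qed

lemma col_eq:
  assumes "finite A" "\<forall>x\<in>A. x ! i < q" "q dvd card A"
    "\<forall>b<q. cnt A i b = card A div q"
  shows "q * Dp A i = (q - 1) * card A ^ 2"
proof -
  note sp = split_sq[OF assms(1,2)]
  obtain k where k: "card A = q * k" using assms(3) by blast
  have "q * (\<Sum>b<q. (cnt A i b)^2) = card A ^ 2"
  proof (cases "q = 0")
    case True thus ?thesis using k by simp
  next
    case False
    hence "(\<Sum>b<q. (cnt A i b)^2) = q * k^2" using assms(4) k by simp
    thus ?thesis using k by (simp add: power2_eq_square)
  qed
  moreover have "q * card A ^ 2 = q * Dp A i + q * (\<Sum>b<q. (cnt A i b)^2)"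
    using sp(1) by (metis add_mult_distrib2)
  moreover have "(q - 1) * card A ^ 2 = q * card A ^ 2 - card A ^ 2"
    by (simp add: diff_mult_distrib)
  ultimately show ?thesis by linarith
qed

lemma Eqn_props: "x \<in> Eqn q n \<Longrightarrow> length x = n"
  "x \<in> Eqn q n \<Longrightarrow> i < n \<Longrightarrow> x ! i < q"
  unfolding Eqn_def by (auto dest!: nth_mem)

lemma sum_ncols:
  assumes "finite A" "A \<subseteq> Eqn q n"
  shows "(\<Sum>p\<in>A \<times> A. hamming (fst p) (snd p)) = (\<Sum>i\<in>ncols n A. Dp A i)"
proof -
  have "(\<Sum>p\<in>A \<times> A. hamming (fst p) (snd p)) = (\<Sum>i<n. Dp A i)"
    using pair_sum[OF assms(1)] assms(2) Eqn_props(1) by blast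
  also have "\<dots> = (\<Sum>i\<in>ncols n A. Dp A i)"
  proof (rule sum.mono_neutral_right)
    show "finite {..<n}" by simp
    show "ncols n A \<subseteq> {..<n}" unfolding ncols_def by auto
    show "\<forall>i\<in>{..<n} - ncols n A. Dp A i = 0"
    proof
      fix i assume "i \<in> {..<n} - ncols n A"
      thus "Dp A i = 0" using Dp_zero[of i n A] by simp
    qed
  qed
  finally show ?thesis .
qed

lemma R_ncols: "R n A = card (ncols n A)"
  unfolding R_def ncols_def by simp

theorem mainTheorem2:
  fixes n q :: nat and A :: "nat list set"
  assumes "n \<ge> 2" and "q \<ge> 2"
    and "A \<subseteq> Eqn q n"
    and "q dvd card A"
    and "\<forall>i<n. (\<exists>x\<in>A. \<exists>y\<in>A. x ! i \<noteq> y ! i) \<longrightarrow>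
           (\<forall>b<q. card {x\<in>A. x ! i = b} = card A div q)"
  shows "metrically_dense q n A"
  unfolding metrically_dense_def
proof (intro allI impI, elim conjE)
  fix B assume BE: "B \<subseteq> Eqn q n" and iso: "isometric A B"
  obtain \<phi> where bij: "bij_betw \<phi> A B"
    and dist: "\<forall>x\<in>A. \<forall>y\<in>A. hamming (\<phi> x) (\<phi> y) = hamming x y"
    using iso unfolding isometric_def by blast
  have finA: "finite A" using assms(3) finite_Eqn finite_subset by blast
  have finB: "finite B" using BE finite_Eqn finite_subset by blast
  have cardB: "card B = card A" using bij by (simp add: bij_betw_same_card)
  define K where "K = (q - 1) * card A ^ 2"
  have "(\<Sum>p\<in>A \<times> A. hamming (fst (map_prod \<phi> \<phi> p)) (snd (map_prod \<phi> \<phi> p)))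
      = (\<Sum>p\<in>B \<times> B. hamming (fst p) (snd p))"
    by (rule sum.reindex_bij_betw[OF bij_betw_map_prod[OF bij bij]])
  moreover have "(\<Sum>p\<in>A \<times> A. hamming (fst (map_prod \<phi> \<phi> p)) (snd (map_prod \<phi> \<phi> p)))
      = (\<Sum>p\<in>A \<times> A. hamming (fst p) (snd p))"
    using dist by (intro sum.cong) auto
  ultimately have SAB: "(\<Sum>i\<in>ncols n A. Dp A i) = (\<Sum>i\<in>ncols n B. Dp B i)"
    using sum_ncols[OF finA assms(3)] sum_ncols[OF finB BE] by simp
  have "q * (\<Sum>i\<in>ncols n A. Dp A i) = (\<Sum>i\<in>ncols n A. q * Dp A i)"
    by (simp add: sum_distrib_left)
  also have "\<dots> = (\<Sum>i\<in>ncols n A. K)"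
  proof (rule sum.cong[OF refl])
    fix i assume i: "i \<in> ncols n A"
    show "q * Dp A i = K" unfolding K_def
    proof (rule col_eq[OF finA _ assms(4)])
      show "\<forall>x\<in>A. x ! i < q" using i assms(3) Eqn_props(2) unfolding ncols_def by blast
      show "\<forall>b<q. cnt A i b = card A div q" using i assms(5) unfolding ncols_def cnt_def by blast
    qed
  qed
  finally have eA: "q * (\<Sum>i\<in>ncols n A. Dp A i) = R n A * K" by (simp add: R_ncols)
  have "q * (\<Sum>i\<in>ncols n B. Dp B i) = (\<Sum>i\<in>ncols n B. q * Dp B i)"
    by (simp add: sum_distrib_left)
  also have "\<dots> \<le> (\<Sum>i\<in>ncols n B. K)"
  proof (rule sum_mono)
    fix i assume i: "i \<in> ncols n B"
    have "\<forall>x\<in>B. x ! i < q" using i BE Eqn_props(2) unfolding ncols_def by blast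
    thus "q * Dp B i \<le> K" unfolding K_def using col_bound[OF finB] cardB by metis
  qed
  finally have eB: "q * (\<Sum>i\<in>ncols n B. Dp B i) \<le> R n B * K" by (simp add: R_ncols)
  have le: "R n A * K \<le> R n B * K" using eA eB SAB by simp
  show "R n A \<le> R n B"
  proof (cases "A = {}")
    case True thus ?thesis unfolding R_def by simp
  next
    case False
    hence "card A > 0" using finA by auto
    hence "K > 0" unfolding K_def using assms(2) by simp
    thus ?thesis using le by simp
  qed
qed

end
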